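(* With $Y$, $Y^+$, $X$, $\Delta^+$ as in the context, one has $\gamma_{Y^+/X}(1)=-p\,N_{\Delta^+}\in\mathbb{Z}[\Delta^+]$, where $N_{\Delta^+}=\sum_{\sigma\in\Delta^+}\sigma$.
   Context: Let $p$ be an odd prime, $\Delta=\mathrm{Gal}(\mathbb{Q}(\zeta_p)/\mathbb{Q})$, $\sigma_i:\zeta_p\mapsto\zeta_p^i$, $j=\sigma_{-1}$, $\Delta^+=\Delta/\langle j\rangle$. Digraphs have incidence $e\mapsto(o(e),t(e))$; derived digraph $X(G,\alpha)$ of $\alpha:E_X\to G$ has vertices $V_X\times G$, edges $E_X\times G$, $o(e,\sigma)=(o(e),\sigma)$, $t(e,\sigma)=(t(e),\sigma\alpha(e))$, and $G$ acts by left multiplication on the second coordinate. $X$ is the bouquet (one vertex) with $\frac{p-1}{2}p+1$ loops $e_0$, $e_{i,k}$ ($1\le k\le i\le p-1$), $\alpha(e_0)=\sigma_1$, $\alpha(e_{i,k})=\sigma_i^{-1}$, $Y=X(\Delta,\alpha)$, and $Y^+=Y_{\langle j\rangle}$ the quotient digraph by $\langle j\rangle$, on which $\Delta^+$ acts freely on vertices with quotient $X$. For a finite abelian group $K$ acting on a finite digraph $W$ freely on vertices, $\gamma_{W/W_K}(u)=\det_{\mathbb{Z}[K][u]}(\mathcal{I}-\mathcal{A}_Wu)$ on the free $\mathbb{Z}[K][u]$-module $\mathbb{Z}V_W[u]$, where $\mathcal{A}_W(w)=\sum_{o(\varepsilon)=w}t(\varepsilon)$. *)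

theory Defs
  imports "HOL-Algebra.Algebra" "HOL-Combinatorics.Permutations"
begin

record ('v, 'e) digraph =
  verts :: "'v set"
  arcs  :: "'e set"
  orig  :: "'e \<Rightarrow> 'v"
  targ  :: "'e \<Rightarrow> 'v"

definition derived_digraph ::
  "('v, 'e) digraph \<Rightarrow> ('g, 'b) monoid_scheme \<Rightarrow> ('e \<Rightarrow> 'g) \<Rightarrow> ('v \<times> 'g, 'e \<times> 'g) digraph" where
  "derived_digraph Xg G \<alpha> =
     \<lparr> verts = verts Xg \<times> carrier G,
       arcs = arcs Xg \<times> carrier G,
       orig = (\<lambda>(e, s). (orig Xg e, s)),
       targ = (\<lambda>(e, s). (targ Xg e, monoid.mult G s (\<alpha> e))) \<rparr>"

definition derived_act :: "('g, 'b) monoid_scheme \<Rightarrow> 'g \<Rightarrow> 'x \<times> 'g \<Rightarrow> 'x \<times> 'g" where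
  "derived_act G g = (\<lambda>(x, s). (x, monoid.mult G g s))"

definition orbit_of :: "'g set \<Rightarrow> ('g \<Rightarrow> 'x \<Rightarrow> 'x) \<Rightarrow> 'x \<Rightarrow> 'x set" where
  "orbit_of H act x = (\<lambda>h. act h x) ` H"

definition quotient_digraph ::
  "('v, 'e) digraph \<Rightarrow> 'g set \<Rightarrow> ('g \<Rightarrow> 'v \<Rightarrow> 'v) \<Rightarrow> ('g \<Rightarrow> 'e \<Rightarrow> 'e) \<Rightarrow> ('v set, 'e set) digraph" where
  "quotient_digraph W H actv acte =
     \<lparr> verts = orbit_of H actv ` verts W,
       arcs = orbit_of H acte ` arcs W,
       orig = (\<lambda>E. orbit_of H actv (orig W (SOME \<epsilon>. \<epsilon> \<in> E))),
       targ = (\<lambda>E. orbit_of H actv (targ W (SOME \<epsilon>. \<epsilon> \<in> E))) \<rparr>"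

text \<open>Induced action of a coset C (element of G/H) on an H-orbit O.\<close>
definition coset_act :: "('g \<Rightarrow> 'x \<Rightarrow> 'x) \<Rightarrow> 'g set \<Rightarrow> 'x set \<Rightarrow> 'x set" where
  "coset_act act C Orb = (\<lambda>(c, x). act c x) ` (C \<times> Orb)"

definition group_ring :: "('k, 'b) monoid_scheme \<Rightarrow> ('k \<Rightarrow> int) ring" where
  "group_ring K =
     \<lparr> carrier = {f. \<forall>x. x \<notin> carrier K \<longrightarrow> f x = 0},
       monoid.mult = (\<lambda>f g x. if x \<in> carrier K
                        then (\<Sum>y\<in>carrier K. f y * g (monoid.mult K (m_inv K y) x)) else 0),
       one = (\<lambda>x. if x = one K then 1 else 0),
       ring.zero = (\<lambda>x. 0),
       ring.add = (\<lambda>f g x. f x + g x) \<rparr>"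

definition det_ring :: "('a, 'm) ring_scheme \<Rightarrow> 'i set \<Rightarrow> ('i \<Rightarrow> 'i \<Rightarrow> 'a) \<Rightarrow> 'a" where
  "det_ring R I M =
     finsum R (\<lambda>\<pi>. if evenperm \<pi> then finprod R (\<lambda>i. M i (\<pi> i)) I
                    else a_inv R (finprod R (\<lambda>i. M i (\<pi> i)) I))
       {\<pi>. \<pi> permutes I}"

text \<open>Orbit representatives of the K-action on the vertices of W: a basis of the free
  Z[K][u]-module Z V_W[u].\<close>
definition orbit_reps :: "('k, 'b) monoid_scheme \<Rightarrow> ('k \<Rightarrow> 'v \<Rightarrow> 'v) \<Rightarrow> ('v, 'e) digraph \<Rightarrow> 'v set" where
  "orbit_reps K act W = (\<lambda>Orb. SOME v. v \<in> Orb) ` (orbit_of (carrier K) act ` verts W)"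

text \<open>Coefficient of the basis element r' in A_W(r), an element of Z[K]:
  A_W(r) = sum over edges with o(e) = r of t(e), and t(e) = k . r'.\<close>
definition adj_coeff :: "('k, 'b) monoid_scheme \<Rightarrow> ('k \<Rightarrow> 'v \<Rightarrow> 'v) \<Rightarrow> ('v, 'e) digraph
    \<Rightarrow> 'v \<Rightarrow> 'v \<Rightarrow> ('k \<Rightarrow> int)" where
  "adj_coeff K act W r r' =
     (\<lambda>k. if k \<in> carrier K
          then int (card {\<epsilon> \<in> arcs W. orig W \<epsilon> = r \<and> targ W \<epsilon> = act k r'}) else 0)"

definition gamma :: "('k, 'b) monoid_scheme \<Rightarrow> ('k \<Rightarrow> 'v \<Rightarrow> 'v) \<Rightarrow> ('v, 'e) digraph
    \<Rightarrow> (nat \<Rightarrow> ('k \<Rightarrow> int))" where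
  "gamma K act W =
     (let ZK = group_ring K; P = UP ZK; R = orbit_reps K act W in
      det_ring P R (\<lambda>r r'. a_minus P (if r = r' then one P else ring.zero P)
                            (monom P (adj_coeff K act W r r') 1)))"

definition gamma_at_1 :: "('k, 'b) monoid_scheme \<Rightarrow> ('k \<Rightarrow> 'v \<Rightarrow> 'v) \<Rightarrow> ('v, 'e) digraph
    \<Rightarrow> ('k \<Rightarrow> int)" where
  "gamma_at_1 K act W = eval (group_ring K) (group_ring K) id (one (group_ring K)) (gamma K act W)"

text \<open>Delta = Gal(Q(zeta_p)/Q), with sigma_i represented by i in {1..p-1}
  (sigma_i sigma_k = sigma_{ik mod p}).\<close>
definition Delta :: "nat \<Rightarrow> nat monoid" where
  "Delta p = \<lparr> carrier = {1..p - 1}, monoid.mult = (\<lambda>a b. (a * b) mod p), one = 1 \<rparr>"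

text \<open>j = sigma_{-1}\<close>
definition jay :: "nat \<Rightarrow> nat" where "jay p = p - 1"

definition Delta_plus :: "nat \<Rightarrow> nat set monoid" where
  "Delta_plus p = Delta p Mod {1, jay p}"

text \<open>The bouquet X: one vertex, loops e_0 = None and e_{i,k} = Some (i,k), 1 <= k <= i <= p-1.\<close>
definition Xb :: "nat \<Rightarrow> (unit, (nat \<times> nat) option) digraph" where
  "Xb p = \<lparr> verts = {()},
            arcs = {None} \<union> Some ` {(i, k). 1 \<le> k \<and> k \<le> i \<and> i \<le> p - 1},
            orig = (\<lambda>_. ()), targ = (\<lambda>_. ()) \<rparr>"

definition alpha :: "nat \<Rightarrow> (nat \<times> nat) option \<Rightarrow> nat" where
  "alpha p e = (case e of None \<Rightarrow> 1 | Some (i, k) \<Rightarrow> m_inv (Delta p) i)"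

definition Yd :: "nat \<Rightarrow> (unit \<times> nat, (nat \<times> nat) option \<times> nat) digraph" where
  "Yd p = derived_digraph (Xb p) (Delta p) (alpha p)"

definition Yplus :: "nat \<Rightarrow> ((unit \<times> nat) set, ((nat \<times> nat) option \<times> nat) set) digraph" where
  "Yplus p = quotient_digraph (Yd p) {1, jay p} (derived_act (Delta p)) (derived_act (Delta p))"

definition Yplus_act :: "nat \<Rightarrow> nat set \<Rightarrow> (unit \<times> nat) set \<Rightarrow> (unit \<times> nat) set" where
  "Yplus_act p = coset_act (derived_act (Delta p))"

definition norm_elt :: "('k, 'b) monoid_scheme \<Rightarrow> ('k \<Rightarrow> int)" where
  "norm_elt K = (\<lambda>x. if x \<in> carrier K then 1 else 0)"

end

theory Submission
  imports Defs
begin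

lemma gr_simps:
  "carrier (group_ring K) = {f. \<forall>x. x \<notin> carrier K \<longrightarrow> f x = 0}"
  "f \<otimes>\<^bsub>group_ring K\<^esub> g = (\<lambda>x. if x \<in> carrier K
                        then (\<Sum>y\<in>carrier K. f y * g (inv\<^bsub>K\<^esub> y \<otimes>\<^bsub>K\<^esub> x)) else 0)"
  "\<one>\<^bsub>group_ring K\<^esub> = (\<lambda>x. if x = \<one>\<^bsub>K\<^esub> then 1 else 0)"
  "\<zero>\<^bsub>group_ring K\<^esub> = (\<lambda>x. 0)"
  "f \<oplus>\<^bsub>group_ring K\<^esub> g = (\<lambda>x. f x + g x)"
  by (simp_all add: group_ring_def)

lemma bij_lmult:
  assumes "group K" "z \<in> carrier K"
  shows "bij_betw (\<lambda>w. z \<otimes>\<^bsub>K\<^esub> w) (carrier K) (carrier K)"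
proof -
  interpret group K by fact
  show ?thesis
    by (rule bij_betwI[where g="\<lambda>w. inv\<^bsub>K\<^esub> z \<otimes>\<^bsub>K\<^esub> w"])
       (auto simp: assms m_assoc[symmetric])
qed

lemma bij_invmult:
  assumes "group K" "x \<in> carrier K"
  shows "bij_betw (\<lambda>w. inv\<^bsub>K\<^esub> w \<otimes>\<^bsub>K\<^esub> x) (carrier K) (carrier K)"
proof -
  interpret group K by fact
  show ?thesis
    by (rule bij_betwI[where g="\<lambda>w. inv\<^bsub>K\<^esub> (w \<otimes>\<^bsub>K\<^esub> inv\<^bsub>K\<^esub> x)"])
       (auto simp: assms m_assoc inv_mult_group)
qed

context comm_group begin
lemma group_ring_cring:
  assumes fin: "finite (carrier G)"
  shows "cring (group_ring G)"
proof -
  let ?R = "group_ring G"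
  have ag: "abelian_group ?R"
  proof (rule abelian_groupI)
    fix f assume "f \<in> carrier ?R"
    then show "\<exists>y\<in>carrier ?R. y \<oplus>\<^bsub>?R\<^esub> f = \<zero>\<^bsub>?R\<^esub>"
      by (intro bexI[where x="\<lambda>x. - f x"]) (auto simp: gr_simps)
  qed (auto simp: gr_simps)
  have cm: "comm_monoid ?R"
  proof (rule comm_monoidI)
    fix f g assume "f \<in> carrier ?R" "g \<in> carrier ?R"
    then show "f \<otimes>\<^bsub>?R\<^esub> g \<in> carrier ?R" by (auto simp: gr_simps)
  next
    show "\<one>\<^bsub>?R\<^esub> \<in> carrier ?R" by (auto simp: gr_simps)
  next
    fix f assume f: "f \<in> carrier ?R"
    show "\<one>\<^bsub>?R\<^esub> \<otimes>\<^bsub>?R\<^esub> f = f"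
    proof
      fix x
      show "(\<one>\<^bsub>?R\<^esub> \<otimes>\<^bsub>?R\<^esub> f) x = f x"
      proof (cases "x \<in> carrier G")
        case True
        have "(\<Sum>y\<in>carrier G. (if y = \<one> then 1 else 0) * f (inv y \<otimes> x))
              = (\<Sum>y\<in>carrier G. if y = \<one> then f (inv y \<otimes> x) else 0)"
          by (rule sum.cong) auto
        also have "\<dots> = f x" using True fin by (simp add: sum.delta)
        finally show ?thesis using True by (simp add: gr_simps)
      qed (use f in \<open>auto simp: gr_simps\<close>)
    qed
  next
    fix f g assume f: "f \<in> carrier ?R" and g: "g \<in> carrier ?R"
    show "f \<otimes>\<^bsub>?R\<^esub> g = g \<otimes>\<^bsub>?R\<^esub> f"
    proof
      fix x
      show "(f \<otimes>\<^bsub>?R\<^esub> g) x = (g \<otimes>\<^bsub>?R\<^esub> f) x"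
      proof (cases "x \<in> carrier G")
        case True
        have "(\<Sum>y\<in>carrier G. g y * f (inv y \<otimes> x))
            = (\<Sum>w\<in>carrier G. g (inv w \<otimes> x) * f (inv (inv w \<otimes> x) \<otimes> x))"
          by (rule sum.reindex_bij_betw[OF bij_invmult[OF is_group True], symmetric])
        also have "\<dots> = (\<Sum>w\<in>carrier G. f w * g (inv w \<otimes> x))"
        proof (rule sum.cong)
          fix w assume w: "w \<in> carrier G"
          have "inv (inv w \<otimes> x) \<otimes> x = w"
          proof -
            have "inv x \<otimes> (w \<otimes> x) = w \<otimes> (inv x \<otimes> x)"
              using w True by (simp add: m_lcomm)
            then show ?thesis using w True by (simp add: inv_mult_group m_assoc)
          qed
          then show "g (inv w \<otimes> x) * f (inv (inv w \<otimes> x) \<otimes> x) = f w * g (inv w \<otimes> x)"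
            by simp
        qed simp
        finally show ?thesis using True by (simp add: gr_simps)
      qed (auto simp: gr_simps)
    qed
  next
    fix f g h assume f: "f \<in> carrier ?R" and g: "g \<in> carrier ?R" and h: "h \<in> carrier ?R"
    show "f \<otimes>\<^bsub>?R\<^esub> g \<otimes>\<^bsub>?R\<^esub> h = f \<otimes>\<^bsub>?R\<^esub> (g \<otimes>\<^bsub>?R\<^esub> h)"
    proof
      fix x
      show "(f \<otimes>\<^bsub>?R\<^esub> g \<otimes>\<^bsub>?R\<^esub> h) x = (f \<otimes>\<^bsub>?R\<^esub> (g \<otimes>\<^bsub>?R\<^esub> h)) x"
      proof (cases "x \<in> carrier G")
        case True
        have "(\<Sum>y\<in>carrier G. (\<Sum>z\<in>carrier G. f z * g (inv z \<otimes> y)) * h (inv y \<otimes> x))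
            = (\<Sum>y\<in>carrier G. \<Sum>z\<in>carrier G. f z * (g (inv z \<otimes> y) * h (inv y \<otimes> x)))"
          by (simp add: sum_distrib_right mult.assoc)
        also have "\<dots> = (\<Sum>z\<in>carrier G. \<Sum>y\<in>carrier G. f z * (g (inv z \<otimes> y) * h (inv y \<otimes> x)))"
          by (rule sum.swap)
        also have "\<dots> = (\<Sum>z\<in>carrier G. f z * (\<Sum>w\<in>carrier G. g w * h (inv w \<otimes> (inv z \<otimes> x))))"
        proof (rule sum.cong)
          fix z assume z: "z \<in> carrier G"
          have "(\<Sum>y\<in>carrier G. g (inv z \<otimes> y) * h (inv y \<otimes> x))
              = (\<Sum>w\<in>carrier G. g (inv z \<otimes> (z \<otimes> w)) * h (inv (z \<otimes> w) \<otimes> x))"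
            by (rule sum.reindex_bij_betw[OF bij_lmult[OF is_group z], symmetric])
          also have "\<dots> = (\<Sum>w\<in>carrier G. g w * h (inv w \<otimes> (inv z \<otimes> x)))"
          proof (rule sum.cong)
            fix w assume w: "w \<in> carrier G"
            have 1: "inv z \<otimes> (z \<otimes> w) = w" using z w by (simp add: m_assoc[symmetric])
            have 2: "inv (z \<otimes> w) \<otimes> x = inv w \<otimes> (inv z \<otimes> x)"
              using z w True by (simp add: inv_mult_group m_assoc)
            show "g (inv z \<otimes> (z \<otimes> w)) * h (inv (z \<otimes> w) \<otimes> x) = g w * h (inv w \<otimes> (inv z \<otimes> x))"
              by (simp only: 1 2)
          qed simp
          finally show "(\<Sum>y\<in>carrier G. f z * (g (inv z \<otimes> y) * h (inv y \<otimes> x)))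
              = f z * (\<Sum>w\<in>carrier G. g w * h (inv w \<otimes> (inv z \<otimes> x)))"
            by (simp only: sum_distrib_left[symmetric])
        qed simp
        finally show ?thesis using True by (simp add: gr_simps)
      qed (auto simp: gr_simps)
    qed
  qed
  show ?thesis
  proof (rule cringI[OF ag cm])
    fix f g h assume "f \<in> carrier ?R" "g \<in> carrier ?R" "h \<in> carrier ?R"
    show "(f \<oplus>\<^bsub>?R\<^esub> g) \<otimes>\<^bsub>?R\<^esub> h = f \<otimes>\<^bsub>?R\<^esub> h \<oplus>\<^bsub>?R\<^esub> g \<otimes>\<^bsub>?R\<^esub> h"
      by (auto simp: gr_simps distrib_right sum.distrib)
  qed
qed

end


lemma (in cring) eval_one_minus_X:
  assumes a: "a \<in> carrier R"
  shows "UnivPoly.eval R R id \<one>\<^bsub>R\<^esub> (\<one>\<^bsub>UP R\<^esub> \<ominus>\<^bsub>UP R\<^esub> up_ring.monom (UP R) a 1) = \<one>\<^bsub>R\<^esub> \<ominus>\<^bsub>R\<^esub> a"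
proof -
  interpret UP_pre_univ_prop R R id "UP R"
    by unfold_locales (simp_all add: is_cring id_ring_hom)
  have hom: "UnivPoly.eval R R id \<one> \<in> ring_hom (UP R) R" by (rule eval_ring_hom) simp
  interpret E: ring_hom_cring "UP R" R "UnivPoly.eval R R id \<one>" by unfold_locales (rule hom)
  have m: "up_ring.monom (UP R) a 1 \<in> carrier (UP R)" using a by simp
  have "UnivPoly.eval R R id \<one> (\<one>\<^bsub>UP R\<^esub> \<ominus>\<^bsub>UP R\<^esub> up_ring.monom (UP R) a 1)
      = UnivPoly.eval R R id \<one> \<one>\<^bsub>UP R\<^esub> \<ominus> UnivPoly.eval R R id \<one> (up_ring.monom (UP R) a 1)"
    using E.hom_add[of "\<one>\<^bsub>UP R\<^esub>" "\<ominus>\<^bsub>UP R\<^esub> up_ring.monom (UP R) a 1"]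
      E.hom_a_inv[of "up_ring.monom (UP R) a 1"] m
    by (simp add: a_minus_def)
  also have "\<dots> = \<one> \<ominus> a"
    using eval_monom[of a "\<one>\<^bsub>R\<^esub>" 1] a by simp
  finally show ?thesis .
qed

lemma (in cring) det_ring_single:
  assumes m: "M r r \<in> carrier R"
  shows "det_ring R {r} M = M r r"
proof -
  have "{\<pi>. \<pi> permutes {r}} = {id}" by (auto simp: permutes_sing)
  moreover have "finprod R (\<lambda>i. M i (id i)) {r} = M r r" using m by simp
  ultimately show ?thesis using m by (simp add: det_ring_def evenperm_id)
qed



lemma gr_minus:
  assumes "comm_group K" "finite (carrier K)"
    and "f \<in> carrier (group_ring K)" "g \<in> carrier (group_ring K)"
  shows "f \<ominus>\<^bsub>group_ring K\<^esub> g = (\<lambda>x. f x - g x)"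
proof -
  interpret cring "group_ring K" using comm_group.group_ring_cring assms by blast
  have "\<ominus>\<^bsub>group_ring K\<^esub> g = (\<lambda>x. - g x)"
    by (rule minus_equality) (use assms in \<open>auto simp: gr_simps\<close>)
  then show ?thesis by (simp add: a_minus_def gr_simps)
qed

lemma adj_coeff_carrier: "adj_coeff K act W r r' \<in> carrier (group_ring K)"
  by (simp add: gr_simps adj_coeff_def)

lemma gamma_at_1_single:
  assumes cg: "comm_group K" and fin: "finite (carrier K)"
    and reps: "orbit_reps K act W = {r}"
  shows "gamma_at_1 K act W = (\<lambda>x. (if x = \<one>\<^bsub>K\<^esub> then 1 else 0) - adj_coeff K act W r r x)"
proof -
  let ?R = "group_ring K"
  let ?a = "adj_coeff K act W r r"
  have R: "cring ?R" using comm_group.group_ring_cring cg fin by blast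
  have a: "?a \<in> carrier ?R" by (rule adj_coeff_carrier)
  have one: "\<one>\<^bsub>K\<^esub> \<in> carrier K"
  proof -
    interpret comm_group K by (rule cg)
    show ?thesis by simp
  qed
  interpret U: UP_cring ?R "UP ?R" using R by (simp add: UP_cring_def)
  have Pc: "cring (UP ?R)" by (rule U.UP_cring)
  have m: "\<one>\<^bsub>UP ?R\<^esub> \<ominus>\<^bsub>UP ?R\<^esub> monom (UP ?R) ?a 1 \<in> carrier (UP ?R)"
    using U.monom_closed[OF a, of 1] by (simp add: U.P.minus_closed)
  have "gamma K act W = \<one>\<^bsub>UP ?R\<^esub> \<ominus>\<^bsub>UP ?R\<^esub> monom (UP ?R) ?a 1"
    unfolding gamma_def Let_def reps
    by (rule trans[OF cring.det_ring_single[OF Pc]]) (use m in auto)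
  then have "gamma_at_1 K act W = \<one>\<^bsub>?R\<^esub> \<ominus>\<^bsub>?R\<^esub> ?a"
    unfolding gamma_at_1_def using cring.eval_one_minus_X[OF R a] by simp
  also have "\<dots> = (\<lambda>x. (if x = \<one>\<^bsub>K\<^esub> then 1 else 0) - ?a x)"
    by (subst gr_minus[OF cg fin]) (use a one in \<open>auto simp: gr_simps\<close>)
  finally show ?thesis .
qed



lemma Delta_simps:
  "carrier (Delta p) = {1..p-1}" "x \<otimes>\<^bsub>Delta p\<^esub> y = x * y mod p" "\<one>\<^bsub>Delta p\<^esub> = 1"
  by (simp_all add: Delta_def)

lemma prime_mult_mod_ne0:
  assumes p: "Factorial_Ring.prime (p::nat)" and a: "a \<in> {1..p-1}" and b: "b \<in> {1..p-1}"
  shows "a * b mod p \<in> {1..p-1}"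
proof -
  have "\<not> p dvd a" "\<not> p dvd b" using a b by (auto dest: dvd_imp_le)
  then have "\<not> p dvd a * b" using p by (simp add: prime_dvd_mult_iff)
  then have "a * b mod p \<noteq> 0" by (simp add: dvd_eq_mod_eq_0)
  moreover have "a * b mod p < p" using p prime_gt_0_nat by auto
  ultimately show ?thesis by auto
qed

lemma Delta_comm_group:
  assumes p: "Factorial_Ring.prime (p::nat)"
  shows "comm_group (Delta p)"
proof (rule comm_groupI)
  have p1: "p > 1" using p prime_gt_1_nat by blast
  fix x y assume "x \<in> carrier (Delta p)" "y \<in> carrier (Delta p)"
  then show "x \<otimes>\<^bsub>Delta p\<^esub> y \<in> carrier (Delta p)"
    using prime_mult_mod_ne0[OF p] by (simp add: Delta_simps)
next
  have p1: "p > 1" using p prime_gt_1_nat by blast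
  then show "\<one>\<^bsub>Delta p\<^esub> \<in> carrier (Delta p)" by (simp add: Delta_simps)
next
  fix x y z assume "x \<in> carrier (Delta p)" "y \<in> carrier (Delta p)" "z \<in> carrier (Delta p)"
  show "x \<otimes>\<^bsub>Delta p\<^esub> y \<otimes>\<^bsub>Delta p\<^esub> z = x \<otimes>\<^bsub>Delta p\<^esub> (y \<otimes>\<^bsub>Delta p\<^esub> z)"
    by (simp add: Delta_simps mod_mult_left_eq mod_mult_right_eq mult.assoc)
next
  fix x y show "x \<otimes>\<^bsub>Delta p\<^esub> y = y \<otimes>\<^bsub>Delta p\<^esub> x" by (simp add: Delta_simps mult.commute)
next
  fix x assume "x \<in> carrier (Delta p)"
  moreover have p1: "p > 1" using p prime_gt_1_nat by blast
  ultimately have "x < p" by (auto simp: Delta_simps)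
  then show "\<one>\<^bsub>Delta p\<^esub> \<otimes>\<^bsub>Delta p\<^esub> x = x" by (simp add: Delta_simps)
next
  fix x assume x: "x \<in> carrier (Delta p)"
  then have x': "x \<in> {1..p-1}" by (simp add: Delta_simps)
  have p1: "p > 1" using p prime_gt_1_nat by blast
  have "coprime x p"
  proof -
    have "\<not> p dvd x" using x' by (auto dest: dvd_imp_le)
    then have "coprime p x" using p by (simp add: prime_imp_coprime)
    then show ?thesis by (simp add: coprime_commute)
  qed
  then have g: "gcd x p = 1" by simp
  obtain u v where uv: "x * u = p * v + gcd x p" using bezout_nat[of x p] x' by auto
  then have e: "x * u mod p = 1" using g p1 by (metis mod_mult_self4 mod_less)
  have e2: "x * (u mod p) mod p = 1" using e by (simp add: mod_mult_right_eq)
  have "u mod p \<noteq> 0" using e2 by (metis mod_0 mult_0_right zero_neq_one)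
  then have "u mod p \<in> {1..p-1}" using p1 by (auto simp: less_Suc_eq_le[symmetric])
  then show "\<exists>y\<in>carrier (Delta p). y \<otimes>\<^bsub>Delta p\<^esub> x = \<one>\<^bsub>Delta p\<^esub>"
    using e2 by (auto simp: Delta_simps mult.commute intro!: bexI[where x="u mod p"])
qed

lemma jay_facts:
  assumes p: "Factorial_Ring.prime (p::nat)" and odd: "odd p"
  shows "jay p \<in> carrier (Delta p)" "jay p \<otimes>\<^bsub>Delta p\<^esub> jay p = 1" "jay p \<noteq> 1"
    and "\<And>d. d \<in> carrier (Delta p) \<Longrightarrow> jay p \<otimes>\<^bsub>Delta p\<^esub> d = p - d"
proof -
  have p1: "p > 2" using p odd prime_ge_2_nat by (metis le_neq_implies_less dvd_refl)
  show "jay p \<in> carrier (Delta p)" using p1 by (simp add: Delta_simps jay_def)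
  show "jay p \<noteq> 1" using p1 by (simp add: jay_def)
  fix d assume "d \<in> carrier (Delta p)"
  then have d: "1 \<le> d" "d \<le> p - 1" by (auto simp: Delta_simps)
  have "(p - 1) * d = (d - 1) * p + (p - d)" using d p1
    by (simp add: algebra_simps diff_mult_distrib diff_mult_distrib2)
  then have "(p - 1) * d mod p = (p - d) mod p" by simp
  also have "\<dots> = p - d" using d p1 by simp
  finally show "jay p \<otimes>\<^bsub>Delta p\<^esub> d = p - d" by (simp add: Delta_simps jay_def)
next
  have p1: "p > 2" using p odd prime_ge_2_nat by (metis le_neq_implies_less dvd_refl)
  obtain q where q: "p = Suc (Suc q)" using p1 by (metis add_2_eq_Suc less_imp_Suc_add)
  have "(p - 1) * (p - 1) = (p - 2) * p + 1" unfolding q by (simp add: algebra_simps)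
  moreover have "Suc ((p - 2) * p) mod p = 1" using p1
    by (metis add.commute mod_mult_self3 Suc_eq_plus1 mod_less  less_trans one_less_numeral_iff semiring_norm(76))
  ultimately show "jay p \<otimes>\<^bsub>Delta p\<^esub> jay p = 1" by (simp add: Delta_simps jay_def)
qed



locale setting =
  fixes p :: nat
  assumes p_prime: "Factorial_Ring.prime p" and p_odd: "odd p"
begin

abbreviation "G \<equiv> Delta p"
abbreviation "H \<equiv> {1, jay p}"

lemma cg: "comm_group G" by (rule Delta_comm_group[OF p_prime])

sublocale G: comm_group G by (rule cg)

lemma jay: "jay p \<in> carrier G" "jay p \<otimes>\<^bsub>G\<^esub> jay p = \<one>\<^bsub>G\<^esub>" "jay p \<noteq> \<one>\<^bsub>G\<^esub>"
  using jay_facts[OF p_prime p_odd] by (auto simp: Delta_simps)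

lemma H_eq: "H = {\<one>\<^bsub>G\<^esub>, jay p}" by (simp add: Delta_simps)

lemma inv_jay: "inv\<^bsub>G\<^esub> jay p = jay p"
  using jay by (intro G.inv_equality) auto

lemma subH: "subgroup H G"
proof (rule G.subgroupI)
  show "H \<subseteq> carrier G" using jay G.one_closed by (auto simp only: H_eq)
  show "H \<noteq> {}" by simp
  fix a assume "a \<in> H"
  then show "inv\<^bsub>G\<^esub> a \<in> H" using inv_jay G.inv_one by (auto simp only: H_eq)
next
  fix a b assume "a \<in> H" "b \<in> H"
  then show "a \<otimes>\<^bsub>G\<^esub> b \<in> H" using jay by (auto simp only: H_eq) auto
qed

lemma normH: "H \<lhd> G" by (rule G.subgroup_imp_normal[OF subH])

lemma K_cg: "comm_group (Delta_plus p)"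
  unfolding Delta_plus_def by (rule G.abelian_FactGroup[OF subH])

lemma K_fin: "finite (carrier (Delta_plus p))"
  unfolding Delta_plus_def carrier_FactGroup by (simp add: Delta_simps)

lemma K_one: "\<one>\<^bsub>Delta_plus p\<^esub> = H"
  unfolding Delta_plus_def by (simp add: one_FactGroup)

lemma K_carrier: "carrier (Delta_plus p) = (\<lambda>c. H #>\<^bsub>G\<^esub> c) ` carrier G"
  unfolding Delta_plus_def carrier_FactGroup by simp

lemma rcos_eq: "x \<in> carrier G \<Longrightarrow> H #>\<^bsub>G\<^esub> x = {x, jay p \<otimes>\<^bsub>G\<^esub> x}"
  by (simp only: H_eq) (auto simp: r_coset_def)

lemma rcos_eq_iff:
  assumes x: "x \<in> carrier G" and y: "y \<in> carrier G"
  shows "H #>\<^bsub>G\<^esub> x = H #>\<^bsub>G\<^esub> y \<longleftrightarrow> x = y \<or> x = jay p \<otimes>\<^bsub>G\<^esub> y"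
proof
  assume "H #>\<^bsub>G\<^esub> x = H #>\<^bsub>G\<^esub> y"
  moreover have "x \<in> H #>\<^bsub>G\<^esub> x" by (rule G.rcos_self[OF x subH])
  ultimately show "x = y \<or> x = jay p \<otimes>\<^bsub>G\<^esub> y" using rcos_eq[OF y] by auto
next
  assume "x = y \<or> x = jay p \<otimes>\<^bsub>G\<^esub> y"
  then have "x \<in> H #>\<^bsub>G\<^esub> y" using rcos_eq[OF y] by auto
  then show "H #>\<^bsub>G\<^esub> x = H #>\<^bsub>G\<^esub> y"
    using G.repr_independence[OF _ y subH] by metis
qed


definition VV :: "nat \<Rightarrow> (unit \<times> nat) set" where
  "VV s = {()} \<times> (H #>\<^bsub>G\<^esub> s)"

lemma alpha_closed: "e \<in> arcs (Xb p) \<Longrightarrow> alpha p e \<in> carrier G"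
  using prime_gt_1_nat[OF p_prime]
  by (auto simp: Xb_def alpha_def Delta_simps(1)[symmetric] intro!: G.inv_closed)
     (auto simp: Delta_simps)

lemma Yd_simps:
  "verts (Yd p) = {()} \<times> carrier G"
  "arcs (Yd p) = arcs (Xb p) \<times> carrier G"
  "orig (Yd p) (e, s) = ((), s)"
  "targ (Yd p) (e, s) = ((), s \<otimes>\<^bsub>G\<^esub> alpha p e)"
  by (auto simp: Yd_def derived_digraph_def Xb_def)

lemma orbit_H: "orbit_of H (derived_act G) (x, s) = {x} \<times> (H #>\<^bsub>G\<^esub> s)"
  unfolding orbit_of_def derived_act_def r_coset_def by auto

lemma unit_image: "f ` ({()} \<times> A) = (\<lambda>s. f ((), s)) ` A"
  by force

lemma prod_image: "f ` (A \<times> B) = (\<lambda>(a, b). f (a, b)) ` (A \<times> B)"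
  by simp

lemma Yplus_verts: "verts (Yplus p) = VV ` carrier G"
  unfolding Yplus_def quotient_digraph_def Yd_simps VV_def
  by (simp only: digraph.simps unit_image orbit_H)

lemma Yplus_arcs: "arcs (Yplus p) = (\<lambda>(e, s). {e} \<times> (H #>\<^bsub>G\<^esub> s)) ` (arcs (Xb p) \<times> carrier G)"
  unfolding Yplus_def quotient_digraph_def Yd_simps
  by (subst prod_image) (simp only: digraph.simps orbit_H)

lemma Yplus_ot:
  "orig (Yplus p) E = orbit_of H (derived_act G) (orig (Yd p) (SOME \<epsilon>. \<epsilon> \<in> E))"
  "targ (Yplus p) E = orbit_of H (derived_act G) (targ (Yd p) (SOME \<epsilon>. \<epsilon> \<in> E))"
  by (simp_all only: Yplus_def quotient_digraph_def digraph.simps)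

lemma some_in_coset:
  assumes s: "s \<in> carrier G"
  obtains s' where "(SOME \<epsilon>. \<epsilon> \<in> {e} \<times> (H #>\<^bsub>G\<^esub> s)) = (e, s')" "s' \<in> carrier G"
    "H #>\<^bsub>G\<^esub> s' = H #>\<^bsub>G\<^esub> s"
proof -
  have "(e, s) \<in> {e} \<times> (H #>\<^bsub>G\<^esub> s)" using G.rcos_self[OF s subH] by simp
  then have "(SOME \<epsilon>. \<epsilon> \<in> {e} \<times> (H #>\<^bsub>G\<^esub> s)) \<in> {e} \<times> (H #>\<^bsub>G\<^esub> s)" by (rule someI)
  then obtain s' where e: "(SOME \<epsilon>. \<epsilon> \<in> {e} \<times> (H #>\<^bsub>G\<^esub> s)) = (e, s')" and s': "s' \<in> H #>\<^bsub>G\<^esub> s"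
    by auto
  have "s' \<in> carrier G" using s' rcos_eq[OF s] s jay by auto
  moreover have "H #>\<^bsub>G\<^esub> s = H #>\<^bsub>G\<^esub> s'" by (rule G.repr_independence[OF s' s subH])
  ultimately show ?thesis using that e by auto
qed

lemma Yplus_orig:
  assumes s: "s \<in> carrier G"
  shows "orig (Yplus p) ({e} \<times> (H #>\<^bsub>G\<^esub> s)) = VV s"
proof -
  obtain s' where 1: "(SOME \<epsilon>. \<epsilon> \<in> {e} \<times> (H #>\<^bsub>G\<^esub> s)) = (e, s')" and "s' \<in> carrier G"
    and 3: "H #>\<^bsub>G\<^esub> s' = H #>\<^bsub>G\<^esub> s" by (rule some_in_coset[OF s, of e])
  have "orig (Yplus p) ({e} \<times> (H #>\<^bsub>G\<^esub> s)) = orbit_of H (derived_act G) (orig (Yd p) (e, s'))"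
    unfolding Yplus_ot 1 by (rule refl)
  also have "\<dots> = {()} \<times> (H #>\<^bsub>G\<^esub> s')" unfolding Yd_simps orbit_H by (rule refl)
  also have "\<dots> = VV s" unfolding VV_def 3 by (rule refl)
  finally show ?thesis .
qed

lemma Yplus_targ:
  assumes s: "s \<in> carrier G" and e: "e \<in> arcs (Xb p)"
  shows "targ (Yplus p) ({e} \<times> (H #>\<^bsub>G\<^esub> s)) = VV (s \<otimes>\<^bsub>G\<^esub> alpha p e)"
proof -
  obtain s' where 1: "(SOME \<epsilon>. \<epsilon> \<in> {e} \<times> (H #>\<^bsub>G\<^esub> s)) = (e, s')" and 2: "s' \<in> carrier G"
    and 3: "H #>\<^bsub>G\<^esub> s' = H #>\<^bsub>G\<^esub> s" by (rule some_in_coset[OF s, of e])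
  have Hc: "H \<subseteq> carrier G" using subH by (rule subgroup.subset)
  have "H #>\<^bsub>G\<^esub> (s' \<otimes>\<^bsub>G\<^esub> alpha p e) = H #>\<^bsub>G\<^esub> (s \<otimes>\<^bsub>G\<^esub> alpha p e)"
    using G.coset_mult_assoc[OF Hc 2 alpha_closed[OF e]] G.coset_mult_assoc[OF Hc s alpha_closed[OF e]] 3
    by simp
  have "targ (Yplus p) ({e} \<times> (H #>\<^bsub>G\<^esub> s)) = orbit_of H (derived_act G) (targ (Yd p) (e, s'))"
    unfolding Yplus_ot 1 by (rule refl)
  also have "\<dots> = {()} \<times> (H #>\<^bsub>G\<^esub> (s' \<otimes>\<^bsub>G\<^esub> alpha p e))" unfolding Yd_simps orbit_H by (rule refl)
  also have "\<dots> = VV (s \<otimes>\<^bsub>G\<^esub> alpha p e)" unfolding VV_def using \<open>H #>\<^bsub>G\<^esub> (s' \<otimes>\<^bsub>G\<^esub> alpha p e) = _\<close> by (rule arg_cong)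
  finally show ?thesis .
qed

lemma act_VV:
  assumes c: "c \<in> carrier G" and s: "s \<in> carrier G"
  shows "Yplus_act p (H #>\<^bsub>G\<^esub> c) (VV s) = VV (c \<otimes>\<^bsub>G\<^esub> s)"
proof -
  have "Yplus_act p (H #>\<^bsub>G\<^esub> c) (VV s) = {()} \<times> ((H #>\<^bsub>G\<^esub> c) <#>\<^bsub>G\<^esub> (H #>\<^bsub>G\<^esub> s))"
    unfolding Yplus_act_def coset_act_def derived_act_def VV_def set_mult_def by force
  also have "\<dots> = VV (c \<otimes>\<^bsub>G\<^esub> s)"
    unfolding VV_def using normal.rcos_sum[OF normH c s] by simp
  finally show ?thesis .
qed

lemma VV_eq: "VV s = VV t \<longleftrightarrow> H #>\<^bsub>G\<^esub> s = H #>\<^bsub>G\<^esub> t"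
  unfolding VV_def by blast

lemma orbit_VV:
  assumes s: "s \<in> carrier G"
  shows "orbit_of (carrier (Delta_plus p)) (Yplus_act p) (VV s) = verts (Yplus p)"
proof -
  have "orbit_of (carrier (Delta_plus p)) (Yplus_act p) (VV s) = (\<lambda>c. VV (c \<otimes>\<^bsub>G\<^esub> s)) ` carrier G"
    unfolding orbit_of_def K_carrier image_image using act_VV[OF _ s] by simp
  also have "\<dots> = VV ` carrier G"
  proof
    show "(\<lambda>c. VV (c \<otimes>\<^bsub>G\<^esub> s)) ` carrier G \<subseteq> VV ` carrier G" using s by auto
    show "VV ` carrier G \<subseteq> (\<lambda>c. VV (c \<otimes>\<^bsub>G\<^esub> s)) ` carrier G"
    proof
      fix v assume "v \<in> VV ` carrier G"
      then obtain t where t: "t \<in> carrier G" "v = VV t" by auto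
      have "t = (t \<otimes>\<^bsub>G\<^esub> inv\<^bsub>G\<^esub> s) \<otimes>\<^bsub>G\<^esub> s" using t s by (simp add: G.m_assoc)
      then show "v \<in> (\<lambda>c. VV (c \<otimes>\<^bsub>G\<^esub> s)) ` carrier G" using t s
        by (intro image_eqI[where x="t \<otimes>\<^bsub>G\<^esub> inv\<^bsub>G\<^esub> s"]) auto
    qed
  qed
  finally show ?thesis by (simp add: Yplus_verts)
qed

definition r0 where "r0 = (SOME v. v \<in> verts (Yplus p))"

lemma r0: "\<exists>s0 \<in> carrier G. r0 = VV s0"
proof -
  have "verts (Yplus p) \<noteq> {}" using G.one_closed by (auto simp: Yplus_verts)
  then have "r0 \<in> verts (Yplus p)" unfolding r0_def by (simp add: some_in_eq)
  then show ?thesis by (auto simp: Yplus_verts)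
qed

lemma reps: "orbit_reps (Delta_plus p) (Yplus_act p) (Yplus p) = {r0}"
proof -
  have "orbit_of (carrier (Delta_plus p)) (Yplus_act p) ` verts (Yplus p) = {verts (Yplus p)}"
    using orbit_VV G.one_closed by (auto simp: Yplus_verts)
  then show ?thesis unfolding orbit_reps_def r0_def by simp
qed

end


context setting begin

lemma coset_cancel:
  assumes s0: "s0 \<in> carrier G" and a: "a \<in> carrier G" and c: "c \<in> carrier G"
  shows "H #>\<^bsub>G\<^esub> (s0 \<otimes>\<^bsub>G\<^esub> a) = H #>\<^bsub>G\<^esub> (c \<otimes>\<^bsub>G\<^esub> s0) \<longleftrightarrow> H #>\<^bsub>G\<^esub> a = H #>\<^bsub>G\<^esub> c"
proof -
  have 1: "c \<otimes>\<^bsub>G\<^esub> s0 = s0 \<otimes>\<^bsub>G\<^esub> c" using s0 c by (rule G.m_comm[symmetric])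
  have 2: "jay p \<otimes>\<^bsub>G\<^esub> (s0 \<otimes>\<^bsub>G\<^esub> c) = s0 \<otimes>\<^bsub>G\<^esub> (jay p \<otimes>\<^bsub>G\<^esub> c)"
    using jay(1) s0 c by (rule G.m_lcomm)
  have "H #>\<^bsub>G\<^esub> (s0 \<otimes>\<^bsub>G\<^esub> a) = H #>\<^bsub>G\<^esub> (c \<otimes>\<^bsub>G\<^esub> s0)
      \<longleftrightarrow> s0 \<otimes>\<^bsub>G\<^esub> a = s0 \<otimes>\<^bsub>G\<^esub> c \<or> s0 \<otimes>\<^bsub>G\<^esub> a = s0 \<otimes>\<^bsub>G\<^esub> (jay p \<otimes>\<^bsub>G\<^esub> c)"
    using rcos_eq_iff[of "s0 \<otimes>\<^bsub>G\<^esub> a" "c \<otimes>\<^bsub>G\<^esub> s0"] s0 a c 1 2 by simp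
  also have "\<dots> \<longleftrightarrow> a = c \<or> a = jay p \<otimes>\<^bsub>G\<^esub> c"
    using G.Units_l_cancel[of s0] G.Units_eq s0 a c jay(1) by simp
  also have "\<dots> \<longleftrightarrow> H #>\<^bsub>G\<^esub> a = H #>\<^bsub>G\<^esub> c"
    using rcos_eq_iff[OF a c] by simp
  finally show ?thesis .
qed

lemma adj_set:
  assumes s0: "s0 \<in> carrier G" and c: "c \<in> carrier G"
  shows "{E \<in> arcs (Yplus p). orig (Yplus p) E = VV s0 \<and> targ (Yplus p) E = VV (c \<otimes>\<^bsub>G\<^esub> s0)}
       = (\<lambda>e. {e} \<times> (H #>\<^bsub>G\<^esub> s0)) ` {e \<in> arcs (Xb p). H #>\<^bsub>G\<^esub> alpha p e = H #>\<^bsub>G\<^esub> c}"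
proof
  show "{E \<in> arcs (Yplus p). orig (Yplus p) E = VV s0 \<and> targ (Yplus p) E = VV (c \<otimes>\<^bsub>G\<^esub> s0)}
       \<subseteq> (\<lambda>e. {e} \<times> (H #>\<^bsub>G\<^esub> s0)) ` {e \<in> arcs (Xb p). H #>\<^bsub>G\<^esub> alpha p e = H #>\<^bsub>G\<^esub> c}"
  proof
    fix E assume "E \<in> {E \<in> arcs (Yplus p). orig (Yplus p) E = VV s0 \<and> targ (Yplus p) E = VV (c \<otimes>\<^bsub>G\<^esub> s0)}"
    then have E: "E \<in> arcs (Yplus p)" and o: "orig (Yplus p) E = VV s0"
      and t: "targ (Yplus p) E = VV (c \<otimes>\<^bsub>G\<^esub> s0)" by auto
    from E obtain e s where e: "e \<in> arcs (Xb p)" and s: "s \<in> carrier G"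
      and Es: "E = {e} \<times> (H #>\<^bsub>G\<^esub> s)" unfolding Yplus_arcs by auto
    have "VV s = VV s0" using o Yplus_orig[OF s, of e] Es by simp
    then have hs: "H #>\<^bsub>G\<^esub> s = H #>\<^bsub>G\<^esub> s0" by (simp add: VV_eq)
    then have Es0: "E = {e} \<times> (H #>\<^bsub>G\<^esub> s0)" using Es by simp
    have "VV (s0 \<otimes>\<^bsub>G\<^esub> alpha p e) = VV (c \<otimes>\<^bsub>G\<^esub> s0)"
      using t Yplus_targ[OF s0 e] Es0 by simp
    then have "H #>\<^bsub>G\<^esub> alpha p e = H #>\<^bsub>G\<^esub> c"
      using coset_cancel[OF s0 alpha_closed[OF e] c] by (simp add: VV_eq)
    then show "E \<in> (\<lambda>e. {e} \<times> (H #>\<^bsub>G\<^esub> s0)) ` {e \<in> arcs (Xb p). H #>\<^bsub>G\<^esub> alpha p e = H #>\<^bsub>G\<^esub> c}"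
      using Es0 e by auto
  qed
next
  show "(\<lambda>e. {e} \<times> (H #>\<^bsub>G\<^esub> s0)) ` {e \<in> arcs (Xb p). H #>\<^bsub>G\<^esub> alpha p e = H #>\<^bsub>G\<^esub> c}
     \<subseteq> {E \<in> arcs (Yplus p). orig (Yplus p) E = VV s0 \<and> targ (Yplus p) E = VV (c \<otimes>\<^bsub>G\<^esub> s0)}"
  proof
    fix E assume "E \<in> (\<lambda>e. {e} \<times> (H #>\<^bsub>G\<^esub> s0)) ` {e \<in> arcs (Xb p). H #>\<^bsub>G\<^esub> alpha p e = H #>\<^bsub>G\<^esub> c}"
    then obtain e where e: "e \<in> arcs (Xb p)" and h: "H #>\<^bsub>G\<^esub> alpha p e = H #>\<^bsub>G\<^esub> c"
      and E: "E = {e} \<times> (H #>\<^bsub>G\<^esub> s0)" by auto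
    have "E \<in> arcs (Yplus p)" unfolding Yplus_arcs E using e s0 by force
    moreover have "orig (Yplus p) E = VV s0" using Yplus_orig[OF s0] E by simp
    moreover have "targ (Yplus p) E = VV (c \<otimes>\<^bsub>G\<^esub> s0)"
      using Yplus_targ[OF s0 e] E coset_cancel[OF s0 alpha_closed[OF e] c] h by (simp add: VV_eq)
    ultimately show "E \<in> {E \<in> arcs (Yplus p). orig (Yplus p) E = VV s0 \<and> targ (Yplus p) E = VV (c \<otimes>\<^bsub>G\<^esub> s0)}"
      by simp
  qed
qed

lemma inj_arc: 
  assumes s0: "s0 \<in> carrier G"
  shows "inj_on (\<lambda>e. {e} \<times> (H #>\<^bsub>G\<^esub> s0)) A"
proof -
  have "s0 \<in> H #>\<^bsub>G\<^esub> s0" by (rule G.rcos_self[OF s0 subH])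
  then show ?thesis by (auto simp: inj_on_def)
qed


lemma alpha_None: "alpha p None = \<one>\<^bsub>G\<^esub>"
  by (simp add: alpha_def Delta_simps)

lemma alpha_Some: "alpha p (Some (i, k)) = inv\<^bsub>G\<^esub> i"
  by (simp add: alpha_def)

lemma H_coset_one: "H #>\<^bsub>G\<^esub> \<one>\<^bsub>G\<^esub> = H"
  by (rule G.coset_mult_one[OF subgroup.subset[OF subH]])

lemma inv_coset_iff:
  assumes i: "i \<in> carrier G" and c: "c \<in> carrier G"
  shows "H #>\<^bsub>G\<^esub> inv\<^bsub>G\<^esub> i = H #>\<^bsub>G\<^esub> c \<longleftrightarrow> i \<in> {inv\<^bsub>G\<^esub> c, jay p \<otimes>\<^bsub>G\<^esub> inv\<^bsub>G\<^esub> c}"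
proof -
  have "H #>\<^bsub>G\<^esub> inv\<^bsub>G\<^esub> i = H #>\<^bsub>G\<^esub> c \<longleftrightarrow> inv\<^bsub>G\<^esub> i = c \<or> inv\<^bsub>G\<^esub> i = jay p \<otimes>\<^bsub>G\<^esub> c"
    using rcos_eq_iff[OF G.inv_closed[OF i] c] .
  also have "\<dots> \<longleftrightarrow> i = inv\<^bsub>G\<^esub> c \<or> i = inv\<^bsub>G\<^esub> (jay p \<otimes>\<^bsub>G\<^esub> c)"
    using i c jay(1) by (metis G.inv_inv G.m_closed)
  also have "inv\<^bsub>G\<^esub> (jay p \<otimes>\<^bsub>G\<^esub> c) = jay p \<otimes>\<^bsub>G\<^esub> inv\<^bsub>G\<^esub> c"
    using jay(1) c inv_jay by (simp add: G.inv_mult)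
  finally show ?thesis by simp
qed

lemma card_pairs:
  assumes d: "d \<in> carrier G"
  shows "card {(i, k). 1 \<le> k \<and> k \<le> i \<and> i \<in> {d, p - d}} = p"
proof -
  have d1: "1 \<le> d" "d \<le> p - 1" using d by (auto simp: Delta_simps)
  have ne: "d \<noteq> p - d" using p_odd d1 by presburger
  have "{(i, k). 1 \<le> k \<and> k \<le> i \<and> i \<in> {d, p - d}} = Sigma {d, p - d} (\<lambda>i. {1..i})"
    by auto
  then have "card {(i, k). 1 \<le> k \<and> k \<le> i \<and> i \<in> {d, p - d}} = (\<Sum>i\<in>{d, p - d}. card {1..i})"
    by (simp add: card_SigmaI)
  also have "\<dots> = d + (p - d)" using ne by simp
  also have "\<dots> = p" using d1 by simp
  finally show ?thesis .
qed

lemma count_arcs: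
  assumes c: "c \<in> carrier G"
  shows "card {e \<in> arcs (Xb p). H #>\<^bsub>G\<^esub> alpha p e = H #>\<^bsub>G\<^esub> c}
       = (if H #>\<^bsub>G\<^esub> c = H then 1 else 0) + p"
proof -
  define d where "d = inv\<^bsub>G\<^esub> c"
  have d: "d \<in> carrier G" unfolding d_def using c by simp
  have jd: "jay p \<otimes>\<^bsub>G\<^esub> d = p - d" using jay_facts(4)[OF p_prime p_odd d] .
  let ?T = "{(i, k). 1 \<le> k \<and> k \<le> i \<and> i \<le> p - 1}"
  have arcsX: "arcs (Xb p) = {None} \<union> Some ` ?T" by (simp add: Xb_def)
  have split: "{e \<in> arcs (Xb p). H #>\<^bsub>G\<^esub> alpha p e = H #>\<^bsub>G\<^esub> c}
      = (if H #>\<^bsub>G\<^esub> c = H then {None} else {}) \<union> Some ` {(i, k). 1 \<le> k \<and> k \<le> i \<and> i \<in> {d, p - d}}"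
  proof -
    have A: "\<And>i k. 1 \<le> k \<Longrightarrow> k \<le> i \<Longrightarrow> i \<le> p - 1 \<Longrightarrow>
        (H #>\<^bsub>G\<^esub> alpha p (Some (i, k)) = H #>\<^bsub>G\<^esub> c) \<longleftrightarrow> i \<in> {d, p - d}"
    proof -
      fix i k :: nat assume "1 \<le> k" "k \<le> i" "i \<le> p - 1"
      then have i: "i \<in> carrier G" by (simp add: Delta_simps)
      show "(H #>\<^bsub>G\<^esub> alpha p (Some (i, k)) = H #>\<^bsub>G\<^esub> c) \<longleftrightarrow> i \<in> {d, p - d}"
        unfolding alpha_Some inv_coset_iff[OF i c] d_def[symmetric] jd ..
    qed
    have B: "\<And>i. i \<in> {d, p - d} \<Longrightarrow> i \<le> p - 1"
      using d by (auto simp: Delta_simps)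
    have C: "(H #>\<^bsub>G\<^esub> alpha p None = H #>\<^bsub>G\<^esub> c) \<longleftrightarrow> H #>\<^bsub>G\<^esub> c = H"
      unfolding alpha_None H_coset_one by (rule eq_commute)
    show ?thesis
    proof (rule Set.set_eqI)
      fix x :: "(nat \<times> nat) option"
      show "x \<in> {e \<in> arcs (Xb p). H #>\<^bsub>G\<^esub> alpha p e = H #>\<^bsub>G\<^esub> c} \<longleftrightarrow>
        x \<in> (if H #>\<^bsub>G\<^esub> c = H then {None} else {}) \<union> Some ` {(i, k). 1 \<le> k \<and> k \<le> i \<and> i \<in> {d, p - d}}"
      proof (cases x)
        case None
        then show ?thesis unfolding arcsX using C by simp
      next
        case (Some t)
        obtain i k where t: "t = (i, k)" by fastforce
        have "x \<in> {e \<in> arcs (Xb p). H #>\<^bsub>G\<^esub> alpha p e = H #>\<^bsub>G\<^esub> c} \<longleftrightarrow>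
            (1 \<le> k \<and> k \<le> i \<and> i \<le> p - 1) \<and> H #>\<^bsub>G\<^esub> alpha p (Some (i, k)) = H #>\<^bsub>G\<^esub> c"
          unfolding arcsX Some t by blast
        also have "\<dots> \<longleftrightarrow> 1 \<le> k \<and> k \<le> i \<and> i \<in> {d, p - d}"
          using A B by blast
        also have "\<dots> \<longleftrightarrow> x \<in> (if H #>\<^bsub>G\<^esub> c = H then {None} else {}) \<union> Some ` {(i, k). 1 \<le> k \<and> k \<le> i \<and> i \<in> {d, p - d}}"
          unfolding Some t by auto
        finally show ?thesis .
      qed
    qed
  qed
  have fin: "finite {(i, k). 1 \<le> k \<and> k \<le> i \<and> i \<in> {d, p - d}}"
  proof -
    have "{(i, k). 1 \<le> k \<and> k \<le> i \<and> i \<in> {d, p - d}} \<subseteq> {d, p - d} \<times> {1..max d (p - d)}"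
      by auto
    then show ?thesis by (rule finite_subset) simp
  qed
  let ?S = "{(i, k). 1 \<le> k \<and> k \<le> i \<and> i \<in> {d, p - d}}"
  let ?N = "if H #>\<^bsub>G\<^esub> c = H then {None} else ({} :: (nat \<times> nat) option set)"
  have cS: "card (Some ` ?S) = p"
    using card_pairs[OF d] card_image[of Some ?S] by simp
  have "card (?N \<union> Some ` ?S) = card ?N + card (Some ` ?S)"
    by (rule card_Un_disjoint) (use fin in auto)
  also have "\<dots> = (if H #>\<^bsub>G\<^esub> c = H then 1 else 0) + p" using cS by simp
  finally show ?thesis unfolding split .
qed


lemma main:
  "gamma_at_1 (Delta_plus p) (Yplus_act p) (Yplus p) = (\<lambda>x. - int p * norm_elt (Delta_plus p) x)"
proof -
  obtain s0 where s0: "s0 \<in> carrier G" and r0s: "r0 = VV s0" using r0 by blast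
  have g: "gamma_at_1 (Delta_plus p) (Yplus_act p) (Yplus p)
      = (\<lambda>x. (if x = \<one>\<^bsub>Delta_plus p\<^esub> then 1 else 0) - adj_coeff (Delta_plus p) (Yplus_act p) (Yplus p) r0 r0 x)"
    by (rule gamma_at_1_single[OF K_cg K_fin reps])
  have Hin: "H \<in> carrier (Delta_plus p)"
    unfolding K_carrier using H_coset_one G.one_closed by (metis image_eqI)
  show ?thesis unfolding g
  proof (rule ext)
    fix x
    show "(if x = \<one>\<^bsub>Delta_plus p\<^esub> then 1 else 0) - adj_coeff (Delta_plus p) (Yplus_act p) (Yplus p) r0 r0 x
        = - int p * norm_elt (Delta_plus p) x"
    proof (cases "x \<in> carrier (Delta_plus p)")
      case True
      then obtain c where c: "c \<in> carrier G" and xc: "x = H #>\<^bsub>G\<^esub> c" unfolding K_carrier by auto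
      have act: "Yplus_act p x r0 = VV (c \<otimes>\<^bsub>G\<^esub> s0)" unfolding xc r0s by (rule act_VV[OF c s0])
      have "adj_coeff (Delta_plus p) (Yplus_act p) (Yplus p) r0 r0 x
          = int (card {E \<in> arcs (Yplus p). orig (Yplus p) E = VV s0 \<and> targ (Yplus p) E = VV (c \<otimes>\<^bsub>G\<^esub> s0)})"
        unfolding adj_coeff_def using True act r0s by simp
      also have "\<dots> = int (card {e \<in> arcs (Xb p). H #>\<^bsub>G\<^esub> alpha p e = H #>\<^bsub>G\<^esub> c})"
        unfolding adj_set[OF s0 c] card_image[OF inj_arc[OF s0]] ..
      also have "\<dots> = (if x = H then 1 else 0) + int p"
        unfolding count_arcs[OF c] xc by simp
      finally show ?thesis using True K_one by (simp add: norm_elt_def)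
    next
      case False
      then have "x \<noteq> \<one>\<^bsub>Delta_plus p\<^esub>" using Hin K_one by auto
      then show ?thesis using False by (simp add: adj_coeff_def norm_elt_def)
    qed
  qed
qed

end

theorem proposition5p3:
  fixes p :: nat
  assumes "Factorial_Ring.prime p" and "odd p"
  shows "gamma_at_1 (Delta_plus p) (Yplus_act p) (Yplus p)
           = (\<lambda>x. - int p * norm_elt (Delta_plus p) x)"
proof -
  interpret setting p using assms by unfold_locales
  show ?thesis by (rule main)
qed

end
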